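(* Let $G$, $\mathrm{b}$, $(w_{ij})$, the messages $m_{j\to i}(t)$ of Sync-BP, and the quantities $n_{j\to i}(t)$ be as in the context. Then for every edge $\{i,j\}$ of $G$ and every $t=0,1,2,\dots$, $n_{j\to i}(t)=m_{j\to i}(t)$.
   Context: Let $G=(V,E)$ be a finite undirected simple graph, $V=\{1,\dots,n\}$, with real edge weights $w_{ij}$ and positive integers $b_1,\dots,b_n$ with $\deg_G(i)\ge b_i+1$ for all $i$; $N(i)$ is the neighbour set of $i$. Sync-BP messages: $m_{i\to j}(0)=w_{ij}$ and for $t\ge1$, $m_{i\to j}(t)=w_{ij}-\big(b_i\text{-th smallest of }\{m_{\ell\to i}(t-1):\ell\in N(i)\setminus\{j\}\}\big)$, for each ordered pair with $\{i,j\}\in E$. Computation tree: for $i\in V$ and $t\ge0$, $T_i^t$ is the rooted labelled tree with levels $0,1,\dots,t+1$ defined by: the root (level 0) has label $i$; the root has $\deg_G(i)$ children whose labels are exactly the elements of $N(i)$; a node at level $1\le k\le t$ with label $s$ whose parent has label $r$ has children whose labels are exactly the elements of $N(s)\setminus\{r\}$; nodes at level $t+1$ are leaves. An edge between nodes labelled $a,c$ has weight $w_{ac}$. For a child $i_j$ of the root, $T^t_{i_j\to i}$ denotes the subtree consisting of the root edge $(i,i_j)$ together with $i_j$ and all its descendants. A perfect tree-$\mathrm{b}$-matching of such a tree is a set of its edges such that each non-leaf node with label $s$ (other than the root $i$ in the case of $T^t_{i_j\to i}$) is incident to exactly $b_s$ edges of the set. Let $W^+_{i_j\to i}(t)$ (resp.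 $W^-_{i_j\to i}(t)$) be the minimum weight of a perfect tree-$\mathrm{b}$-matching of $T^t_{i_j\to i}$ that contains (resp. does not contain) the root edge $(i,i_j)$, and $n_{i_j\to i}(t)=W^+_{i_j\to i}(t)-W^-_{i_j\to i}(t)$; this is well-defined for every edge $\{i,j\}$ of $G$ via $n_{j\to i}(t)$. *)

theory Defs
  imports Complex_Main "HOL-Library.Multiset"
begin

text \<open>Graph: vertex set {1..n}, symmetric irreflexive adjacency relation E.\<close>

definition nbr :: "nat \<Rightarrow> (nat \<Rightarrow> nat \<Rightarrow> bool) \<Rightarrow> nat \<Rightarrow> nat set" where
  "nbr n E i = {j \<in> {1..n}. E i j}"

definition kth_smallest :: "nat \<Rightarrow> real multiset \<Rightarrow> real" where
  "kth_smallest k M = sorted_list_of_multiset M ! (k - 1)"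

text \<open>Sync-BP messages: msg n E w b t i j is m_{i->j}(t).\<close>
fun msg :: "nat \<Rightarrow> (nat \<Rightarrow> nat \<Rightarrow> bool) \<Rightarrow> (nat \<Rightarrow> nat \<Rightarrow> real) \<Rightarrow> (nat \<Rightarrow> nat)
            \<Rightarrow> nat \<Rightarrow> nat \<Rightarrow> nat \<Rightarrow> real" where
  "msg n E w b 0 i j = w i j"
| "msg n E w b (Suc t) i j =
     w i j - kth_smallest (b i)
       (image_mset (\<lambda>l. msg n E w b t l i) (mset_set (nbr n E i - {j})))"

text \<open>Nodes of a computation tree are identified with the label sequence of the path
  from the root: a non-backtracking walk (consecutive labels adjacent, and a child's
  label differs from its grandparent's label).\<close>
definition nb_walk :: "nat \<Rightarrow> (nat \<Rightarrow> nat \<Rightarrow> bool) \<Rightarrow> nat list \<Rightarrow> bool" where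
  "nb_walk n E p \<longleftrightarrow> set p \<subseteq> {1..n} \<and>
     (\<forall>k. Suc k < length p \<longrightarrow> E (p ! k) (p ! Suc k)) \<and>
     (\<forall>k. k + 2 < length p \<longrightarrow> p ! (k + 2) \<noteq> p ! k)"

text \<open>Edges of the subtree T^t_{j->i} of T_i^t: each tree edge is identified with its
  lower endpoint (child node).\<close>
definition sub_edges :: "nat \<Rightarrow> (nat \<Rightarrow> nat \<Rightarrow> bool) \<Rightarrow> nat \<Rightarrow> nat \<Rightarrow> nat \<Rightarrow> nat list set" where
  "sub_edges n E t j i = {p. nb_walk n E p \<and> 2 \<le> length p \<and> length p \<le> t + 2 \<and> take 2 p = [i, j]}"

definition tedge_weight :: "(nat \<Rightarrow> nat \<Rightarrow> real) \<Rightarrow> nat list \<Rightarrow> real" where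
  "tedge_weight w p = w (last (butlast p)) (last p)"

text \<open>Perfect tree-b-matching of T^t_{j->i}: a set of edges such that every non-leaf
  node other than the root i (i.e. the nodes at levels 1..t) with label s is incident
  to exactly b s edges of the set. The edges incident to node p are p itself
  (edge to the parent) and the edges to its children.\<close>
definition perfect_tbm :: "nat \<Rightarrow> (nat \<Rightarrow> nat \<Rightarrow> bool) \<Rightarrow> (nat \<Rightarrow> nat) \<Rightarrow> nat \<Rightarrow> nat \<Rightarrow> nat
                            \<Rightarrow> nat list set \<Rightarrow> bool" where
  "perfect_tbm n E b t j i M \<longleftrightarrow> M \<subseteq> sub_edges n E t j i \<and>
     (\<forall>p \<in> sub_edges n E t j i. length p \<le> t + 1 \<longrightarrow>
        card {q \<in> M. q = p \<or> butlast q = p} = b (last p))"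

definition W_plus :: "nat \<Rightarrow> (nat \<Rightarrow> nat \<Rightarrow> bool) \<Rightarrow> (nat \<Rightarrow> nat \<Rightarrow> real) \<Rightarrow> (nat \<Rightarrow> nat)
                      \<Rightarrow> nat \<Rightarrow> nat \<Rightarrow> nat \<Rightarrow> real" where
  "W_plus n E w b t j i = Min ((\<lambda>M. \<Sum>q\<in>M. tedge_weight w q) `
      {M. perfect_tbm n E b t j i M \<and> [i, j] \<in> M})"

definition W_minus :: "nat \<Rightarrow> (nat \<Rightarrow> nat \<Rightarrow> bool) \<Rightarrow> (nat \<Rightarrow> nat \<Rightarrow> real) \<Rightarrow> (nat \<Rightarrow> nat)
                      \<Rightarrow> nat \<Rightarrow> nat \<Rightarrow> nat \<Rightarrow> real" where
  "W_minus n E w b t j i = Min ((\<lambda>M. \<Sum>q\<in>M. tedge_weight w q) `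
      {M. perfect_tbm n E b t j i M \<and> [i, j] \<notin> M})"

definition tree_msg :: "nat \<Rightarrow> (nat \<Rightarrow> nat \<Rightarrow> bool) \<Rightarrow> (nat \<Rightarrow> nat \<Rightarrow> real) \<Rightarrow> (nat \<Rightarrow> nat)
                      \<Rightarrow> nat \<Rightarrow> nat \<Rightarrow> nat \<Rightarrow> real" where
  "tree_msg n E w b t j i = W_plus n E w b t j i - W_minus n E w b t j i"

end

theory Submission
  imports Defs
begin


definition gmin :: "'a set \<Rightarrow> ('a \<Rightarrow> real) \<Rightarrow> nat \<Rightarrow> real" where
  "gmin C f m = Min ((\<lambda>S. sum f S) ` {S. S \<subseteq> C \<and> card S = m})"

lemma insort_min: "(\<forall>y\<in>set xs. x \<le> y) \<Longrightarrow> insort x xs = x # xs"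
  by (cases xs) auto

lemma gmin_fin: "finite C \<Longrightarrow> finite {S. S \<subseteq> C \<and> card S = m}"
  by (rule finite_subset[of _ "Pow C"]) auto

lemma gmin_le: "finite C \<Longrightarrow> S \<subseteq> C \<Longrightarrow> card S = m \<Longrightarrow> gmin C f m \<le> sum f S"
  unfolding gmin_def by (rule Min_le) (auto intro: gmin_fin)

lemma gmin_in: assumes "finite C" "m \<le> card C"
  obtains S where "S \<subseteq> C" "card S = m" "sum f S = gmin C f m"
proof -
  obtain T where "T \<subseteq> C" "card T = m" using obtain_subset_with_card_n[OF assms(2)] by metis
  then have "gmin C f m \<in> (\<lambda>S. sum f S) ` {S. S \<subseteq> C \<and> card S = m}"
    unfolding gmin_def by (intro Min_in) (auto intro: gmin_fin[OF assms(1)])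
  then show ?thesis using that by auto
qed

lemma gmin_sorted:
  "finite C \<Longrightarrow> m \<le> card C \<Longrightarrow>
   gmin C f m = sum_list (take m (sorted_list_of_multiset (image_mset f (mset_set C))))"
proof (induction m arbitrary: C)
  case 0
  then have "{S. S \<subseteq> C \<and> card S = 0} = {{}}" by (auto dest: finite_subset)
  then show ?case by (simp add: gmin_def)
next
  case (Suc m)
  then have "C \<noteq> {}" by auto
  have "Min (f ` C) \<in> f ` C" using Suc.prems \<open>C \<noteq> {}\<close> by (intro Min_in) auto
  then obtain a where aC: "a \<in> C" and fa: "f a = Min (f ` C)" by auto
  have amin: "\<forall>x\<in>C. f a \<le> f x" unfolding fa using Suc.prems(1) by auto
  let ?C' = "C - {a}"
  have fin': "finite ?C'" using Suc.prems by auto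
  have card': "m \<le> card ?C'" using Suc.prems aC by auto
  have ms: "mset_set C = add_mset a (mset_set ?C')"
    using Suc.prems(1) aC by (simp add: mset_set.remove)
  have srt: "sorted_list_of_multiset (image_mset f (mset_set C))
      = f a # sorted_list_of_multiset (image_mset f (mset_set ?C'))"
    unfolding ms image_mset_add_mset sorted_list_of_multiset_insert
    by (rule insort_min) (use amin fin' in auto)
  have key: "gmin C f (Suc m) = f a + gmin ?C' f m"
    unfolding gmin_def[of C]
  proof (rule Min_eqI)
    show "finite ((\<lambda>S. sum f S) ` {S. S \<subseteq> C \<and> card S = Suc m})"
      using gmin_fin[OF Suc.prems(1)] by auto
  next
    fix y assume "y \<in> (\<lambda>S. sum f S) ` {S. S \<subseteq> C \<and> card S = Suc m}"
    then obtain S where S: "S \<subseteq> C" "card S = Suc m" "y = sum f S" by auto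
    have finS: "finite S" using S Suc.prems(1) finite_subset by blast
    show "f a + gmin ?C' f m \<le> y"
    proof (cases "a \<in> S")
      case True
      have "gmin ?C' f m \<le> sum f (S - {a})"
        using S True finS by (intro gmin_le[OF fin']) auto
      moreover have "sum f S = f a + sum f (S - {a})" using True finS by (simp add: sum.remove)
      ultimately show ?thesis using S by simp
    next
      case False
      obtain s where s: "s \<in> S" using S by (metis card.empty ex_in_conv nat.simps(3))
      have "gmin ?C' f m \<le> sum f (S - {s})"
        using S s False finS by (intro gmin_le[OF fin']) auto
      moreover have "sum f S = f s + sum f (S - {s})" using s finS by (simp add: sum.remove)
      moreover have "f a \<le> f s" using amin S s by auto
      ultimately show ?thesis using S by simp
    qed
  next
    obtain S' where S': "S' \<subseteq> ?C'" "card S' = m" "sum f S' = gmin ?C' f m"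
      using gmin_in[OF fin' card'] by metis
    have finS': "finite S'" using S' fin' finite_subset by blast
    have "a \<notin> S'" using S' by auto
    then have "sum f (insert a S') = f a + gmin ?C' f m" "card (insert a S') = Suc m"
      using S' finS' by auto
    moreover have "insert a S' \<subseteq> C" using S' aC by auto
    ultimately show "f a + gmin ?C' f m \<in> (\<lambda>S. sum f S) ` {S. S \<subseteq> C \<and> card S = Suc m}"
      by (metis (mono_tags, lifting) image_eqI mem_Collect_eq)
  qed
  show ?case unfolding key srt using Suc.IH[OF fin' card'] by simp
qed

lemma gmin_diff:
  assumes "finite C" "1 \<le> k" "k \<le> card C"
  shows "gmin C f k - gmin C f (k - 1) = kth_smallest k (image_mset f (mset_set C))"
proof -
  let ?L = "sorted_list_of_multiset (image_mset f (mset_set C))"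
  have len: "length ?L = card C"
    by (metis mset_sorted_list_of_multiset size_mset size_image_mset size_mset_set)
  obtain k' where k: "k = Suc k'" using assms by (cases k) auto
  have t: "take k ?L = take k' ?L @ [?L ! k']" using len assms k by (simp add: take_Suc_conv_app_nth)
  have "gmin C f k = sum_list (take k ?L)" using gmin_sorted[OF assms(1) assms(3)] .
  moreover have "gmin C f (k - 1) = sum_list (take k' ?L)"
    using gmin_sorted[OF assms(1), of "k-1" f] assms k by simp
  ultimately show ?thesis using t k by (simp add: kth_smallest_def)
qed



lemma all_nat_split: "(\<forall>k::nat. P k) \<longleftrightarrow> P 0 \<and> (\<forall>k. P (Suc k))"
  by (metis not0_implies_Suc)

lemma nb_walk_Cons3:
  "nb_walk n E (a # c # d # r) \<longleftrightarrow> a \<in> {1..n} \<and> E a c \<and> d \<noteq> a \<and> nb_walk n E (c # d # r)"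
  unfolding nb_walk_def
  apply (subst all_nat_split) apply (subst (2) all_nat_split)
  by auto

lemma nb_walk_2: "nb_walk n E [a, c] \<longleftrightarrow> a \<in> {1..n} \<and> c \<in> {1..n} \<and> E a c"
  unfolding nb_walk_def
  apply (subst all_nat_split)
  by auto



locale bp =
  fixes n :: nat and E :: "nat \<Rightarrow> nat \<Rightarrow> bool" and w :: "nat \<Rightarrow> nat \<Rightarrow> real"
    and b :: "nat \<Rightarrow> nat"
  assumes E_in_V: "\<And>i j. E i j \<Longrightarrow> i \<in> {1..n} \<and> j \<in> {1..n}"
    and E_sym: "\<And>i j. E i j \<Longrightarrow> E j i"
    and E_irrefl: "\<And>i. \<not> E i i"
    and w_sym: "\<And>i j. E i j \<Longrightarrow> w i j = w j i"
    and b_pos: "\<And>i. i \<in> {1..n} \<Longrightarrow> 1 \<le> b i"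
    and deg: "\<And>i. i \<in> {1..n} \<Longrightarrow> b i + 1 \<le> card (nbr n E i)"
begin

definition C :: "nat \<Rightarrow> nat \<Rightarrow> nat set" where "C j i = nbr n E j - {i}"
definition wt :: "nat list set \<Rightarrow> real" where "wt M = (\<Sum>q\<in>M. tedge_weight w q)"
definition PM where "PM t j i c = {M. perfect_tbm n E b t j i M \<and> ([i,j] \<in> M \<longleftrightarrow> c)}"
definition glue where "glue i j R Mk = R \<union> (\<Union>k\<in>C j i. Cons i ` Mk k)"

lemma C_fin: "finite (C j i)" unfolding C_def nbr_def by auto

lemma C_E: "k \<in> C j i \<Longrightarrow> E j k \<and> k \<noteq> i" unfolding C_def nbr_def by auto

lemma sub_fin: "finite (sub_edges n E t j i)"
proof (rule finite_subset)
  show "sub_edges n E t j i \<subseteq> {xs. set xs \<subseteq> {1..n} \<and> length xs \<le> t + 2}"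
    unfolding sub_edges_def nb_walk_def by auto
  show "finite {xs. set xs \<subseteq> {1..n} \<and> length xs \<le> t + 2}"
    by (rule finite_lists_length_le) auto
qed

lemma sub_form: "q \<in> sub_edges n E t k j \<Longrightarrow> \<exists>r. q = j # k # r"
  unfolding sub_edges_def
  by (cases q; cases "tl q") auto

lemma sub_len: "q \<in> sub_edges n E t k j \<Longrightarrow> 2 \<le> length q \<and> length q \<le> t + 2"
  unfolding sub_edges_def by auto

lemma nb_walk_E: "nb_walk n E (a # c # r) \<Longrightarrow> E a c"
  unfolding nb_walk_def by (metis Suc_less_eq length_Cons nth_Cons_0 nth_Cons_Suc zero_less_Suc)

lemma sub_edges_Suc:
  assumes ij: "E i j"
  shows "sub_edges n E (Suc t) j i = insert [i,j] (\<Union>k\<in>C j i. Cons i ` sub_edges n E t k j)"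
proof (rule set_eqI, rule iffI)
  fix p assume p: "p \<in> sub_edges n E (Suc t) j i"
  then obtain r where pr: "p = i # j # r" using sub_form by blast
  show "p \<in> insert [i,j] (\<Union>k\<in>C j i. Cons i ` sub_edges n E t k j)"
  proof (cases r)
    case Nil then show ?thesis using pr by simp
  next
    case (Cons k r')
    have nb: "nb_walk n E (i # j # k # r')" using p pr Cons unfolding sub_edges_def by simp
    then have "k \<noteq> i" "nb_walk n E (j # k # r')" using nb_walk_Cons3 by auto
    moreover have "E j k" using nb_walk_E[OF \<open>nb_walk n E (j # k # r')\<close>] .
    ultimately have "k \<in> C j i" unfolding C_def nbr_def using E_in_V by auto
    moreover have "j # k # r' \<in> sub_edges n E t k j"
      using p pr Cons \<open>nb_walk n E (j # k # r')\<close> unfolding sub_edges_def by simp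
    ultimately show ?thesis using pr Cons by blast
  qed
next
  fix p assume "p \<in> insert [i,j] (\<Union>k\<in>C j i. Cons i ` sub_edges n E t k j)"
  then consider "p = [i,j]" | k q where "k \<in> C j i" "q \<in> sub_edges n E t k j" "p = i # q" by blast
  then show "p \<in> sub_edges n E (Suc t) j i"
  proof cases
    case 1 then show ?thesis unfolding sub_edges_def using nb_walk_2 E_in_V ij by auto
  next
    case 2
    then obtain r where q: "q = j # k # r" using sub_form by blast
    have "nb_walk n E q" using 2 unfolding sub_edges_def by simp
    then have "nb_walk n E p" using 2 q nb_walk_Cons3 E_in_V[OF ij] ij C_E by auto
    then show ?thesis using 2 q sub_len[OF 2(2)] unfolding sub_edges_def by auto
  qed
qed

lemma root_in: "E i j \<Longrightarrow> [i,j] \<in> sub_edges n E t j i"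
  unfolding sub_edges_def using nb_walk_2 E_in_V by auto

lemma tw_Cons: "length q \<ge> 2 \<Longrightarrow> tedge_weight w (i # q) = tedge_weight w q"
  unfolding tedge_weight_def by (cases q rule: rev_cases) (auto simp: butlast_append split: if_splits)

end

context bp begin

definition okg where "okg t i j R Mk \<longleftrightarrow> R \<subseteq> {[i,j]} \<and> (\<forall>k\<in>C j i. Mk k \<subseteq> sub_edges n E t k j)"

lemma glue_sub: "E i j \<Longrightarrow> okg t i j R Mk \<Longrightarrow> glue i j R Mk \<subseteq> sub_edges n E (Suc t) j i"
  unfolding glue_def okg_def sub_edges_Suc by blast

lemma decomp:
  assumes "E i j" "M \<subseteq> sub_edges n E (Suc t) j i"
  shows "M = glue i j (M \<inter> {[i,j]}) (\<lambda>k. {q \<in> sub_edges n E t k j. i # q \<in> M})"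
    and "okg t i j (M \<inter> {[i,j]}) (\<lambda>k. {q \<in> sub_edges n E t k j. i # q \<in> M})"
  using assms unfolding glue_def okg_def sub_edges_Suc[OF assms(1)] by blast+

lemma root_set:
  assumes "E i j" "okg t i j R Mk"
  shows "{q \<in> glue i j R Mk. q = [i,j] \<or> butlast q = [i,j]} = R \<union> (\<lambda>k. [i,j,k]) ` {k \<in> C j i. [j,k] \<in> Mk k}"
proof (rule set_eqI, rule iffI)
  fix x assume x: "x \<in> {q \<in> glue i j R Mk. q = [i,j] \<or> butlast q = [i,j]}"
  show "x \<in> R \<union> (\<lambda>k. [i,j,k]) ` {k \<in> C j i. [j,k] \<in> Mk k}"
  proof (cases "x \<in> R")
    case False
    then obtain k q where kq: "k \<in> C j i" "q \<in> Mk k" "x = i # q" using x unfolding glue_def by blast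
    then have "q \<in> sub_edges n E t k j" using assms unfolding okg_def by blast
    then obtain r where r: "q = j # k # r" using sub_form by blast
    then have "r = []" using x kq by (auto split: if_splits)
    then show ?thesis using kq r by auto
  qed simp
next
  fix x assume "x \<in> R \<union> (\<lambda>k. [i,j,k]) ` {k \<in> C j i. [j,k] \<in> Mk k}"
  then show "x \<in> {q \<in> glue i j R Mk. q = [i,j] \<or> butlast q = [i,j]}"
    using assms unfolding glue_def okg_def by auto
qed

lemma root_card:
  assumes "E i j" "okg t i j R Mk"
  shows "card {q \<in> glue i j R Mk. q = [i,j] \<or> butlast q = [i,j]} = card R + card {k \<in> C j i. [j,k] \<in> Mk k}"
proof -
  have "finite R" using assms unfolding okg_def by (auto intro: finite_subset)
  moreover have "finite ((\<lambda>k. [i,j,k]) ` {k \<in> C j i. [j,k] \<in> Mk k})" using C_fin by auto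
  moreover have "R \<inter> (\<lambda>k. [i,j,k]) ` {k \<in> C j i. [j,k] \<in> Mk k} = {}" using assms unfolding okg_def by auto
  moreover have "card ((\<lambda>k. [i,j,k]) ` {k \<in> C j i. [j,k] \<in> Mk k}) = card {k \<in> C j i. [j,k] \<in> Mk k}"
    by (rule card_image) (auto simp: inj_on_def)
  ultimately show ?thesis unfolding root_set[OF assms] by (simp add: card_Un_disjoint)
qed

lemma node_set:
  assumes "E i j" "okg t i j R Mk" "k \<in> C j i" "q \<in> sub_edges n E t k j"
  shows "{x \<in> glue i j R Mk. x = i # q \<or> butlast x = i # q} = Cons i ` {r \<in> Mk k. r = q \<or> butlast r = q}"
proof (rule set_eqI, rule iffI)
  obtain s where s: "q = j # k # s" using sub_form[OF assms(4)] by blast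
  fix x assume x: "x \<in> {x \<in> glue i j R Mk. x = i # q \<or> butlast x = i # q}"
  show "x \<in> Cons i ` {r \<in> Mk k. r = q \<or> butlast r = q}"
  proof (cases "x \<in> R")
    case True then show ?thesis using x s assms(2) unfolding okg_def by auto
  next
    case False
    then obtain k' r where kq: "k' \<in> C j i" "r \<in> Mk k'" "x = i # r" using x unfolding glue_def by blast
    then have "r \<in> sub_edges n E t k' j" using assms unfolding okg_def by blast
    then obtain r' where r': "r = j # k' # r'" using sub_form by blast
    have "k' = k \<and> (r = q \<or> butlast r = q)" using x kq r' s by (auto split: if_splits)
    then show ?thesis using kq by auto
  qed
next
  fix x assume "x \<in> Cons i ` {r \<in> Mk k. r = q \<or> butlast r = q}"
  then obtain r where r: "r \<in> Mk k" "r = q \<or> butlast r = q" "x = i # r" by blast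
  have "r \<noteq> []" using r sub_len[OF assms(4)] by auto
  then show "x \<in> {x \<in> glue i j R Mk. x = i # q \<or> butlast x = i # q}"
    using r assms(3) unfolding glue_def by auto
qed

lemma node_card:
  assumes "E i j" "okg t i j R Mk" "k \<in> C j i" "q \<in> sub_edges n E t k j"
  shows "card {x \<in> glue i j R Mk. x = i # q \<or> butlast x = i # q} = card {r \<in> Mk k. r = q \<or> butlast r = q}"
  unfolding node_set[OF assms] by (rule card_image) auto

lemma perfect_glue:
  assumes ij: "E i j" and ok: "okg t i j R Mk"
  shows "perfect_tbm n E b (Suc t) j i (glue i j R Mk) \<longleftrightarrow>
    (\<forall>k\<in>C j i. perfect_tbm n E b t k j (Mk k)) \<and> card R + card {k \<in> C j i. [j,k] \<in> Mk k} = b j"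
proof
  assume P: "perfect_tbm n E b (Suc t) j i (glue i j R Mk)"
  have "card R + card {k \<in> C j i. [j,k] \<in> Mk k} = b j"
    using P root_in[OF ij, of "Suc t"] unfolding perfect_tbm_def root_card[OF ij ok, symmetric] by auto
  moreover have "perfect_tbm n E b t k j (Mk k)" if k: "k \<in> C j i" for k
    unfolding perfect_tbm_def
  proof (intro conjI ballI impI)
    show "Mk k \<subseteq> sub_edges n E t k j" using ok k unfolding okg_def by auto
    fix q assume q: "q \<in> sub_edges n E t k j" "length q \<le> t + 1"
    have "i # q \<in> sub_edges n E (Suc t) j i" unfolding sub_edges_Suc[OF ij] using q k by blast
    then have "card {x \<in> glue i j R Mk. x = i # q \<or> butlast x = i # q} = b (last (i # q))"
      using P q unfolding perfect_tbm_def by auto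
    moreover have "last (i # q) = last q" using sub_len[OF q(1)] by auto
    ultimately show "card {r \<in> Mk k. r = q \<or> butlast r = q} = b (last q)"
      using node_card[OF ij ok k q(1)] by simp
  qed
  ultimately show "(\<forall>k\<in>C j i. perfect_tbm n E b t k j (Mk k)) \<and> card R + card {k \<in> C j i. [j,k] \<in> Mk k} = b j"
    by blast
next
  assume H: "(\<forall>k\<in>C j i. perfect_tbm n E b t k j (Mk k)) \<and> card R + card {k \<in> C j i. [j,k] \<in> Mk k} = b j"
  show "perfect_tbm n E b (Suc t) j i (glue i j R Mk)"
    unfolding perfect_tbm_def
  proof (intro conjI ballI impI)
    show "glue i j R Mk \<subseteq> sub_edges n E (Suc t) j i" by (rule glue_sub[OF ij ok])
    fix p assume p: "p \<in> sub_edges n E (Suc t) j i" "length p \<le> Suc t + 1"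
    then consider "p = [i,j]" | k q where "k \<in> C j i" "q \<in> sub_edges n E t k j" "p = i # q"
      unfolding sub_edges_Suc[OF ij] by blast
    then show "card {q \<in> glue i j R Mk. q = p \<or> butlast q = p} = b (last p)"
    proof cases
      case 1 then show ?thesis using H root_card[OF ij ok] by simp
    next
      case 2
      have "last p = last q" using 2 sub_len[OF 2(2)] by auto
      moreover have "length q \<le> t + 1" using 2 p by simp
      ultimately show ?thesis using node_card[OF ij ok 2(1,2)] H 2 unfolding perfect_tbm_def by auto
    qed
  qed
qed

lemma wt_glue:
  assumes ij: "E i j" and ok: "okg t i j R Mk"
  shows "wt (glue i j R Mk) = wt R + (\<Sum>k\<in>C j i. wt (Mk k))"
proof -
  have finM: "finite (Mk k)" if "k \<in> C j i" for k
    using ok that sub_fin unfolding okg_def by (meson finite_subset)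
  have finR: "finite R" using ok unfolding okg_def by (auto intro: finite_subset)
  have disj: "R \<inter> (\<Union>k\<in>C j i. Cons i ` Mk k) = {}"
    using ok sub_len unfolding okg_def by fastforce
  have "wt (glue i j R Mk) = wt R + wt (\<Union>k\<in>C j i. Cons i ` Mk k)"
    unfolding wt_def glue_def using finR finM C_fin disj by (intro sum.union_disjoint) auto
  also have "wt (\<Union>k\<in>C j i. Cons i ` Mk k) = (\<Sum>k\<in>C j i. wt (Cons i ` Mk k))"
    unfolding wt_def
  proof (rule sum.UNION_disjoint)
    show "finite (C j i)" by (rule C_fin)
    show "\<forall>k\<in>C j i. finite (Cons i ` Mk k)" using finM by auto
    show "\<forall>k\<in>C j i. \<forall>k'\<in>C j i. k \<noteq> k' \<longrightarrow> Cons i ` Mk k \<inter> Cons i ` Mk k' = {}"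
    proof (intro ballI impI)
      fix k k' assume "k \<in> C j i" "k' \<in> C j i" "k \<noteq> k'"
      then show "Cons i ` Mk k \<inter> Cons i ` Mk k' = {}"
        using ok sub_form unfolding okg_def by blast
    qed
  qed
  also have "\<dots> = (\<Sum>k\<in>C j i. wt (Mk k))"
  proof (rule sum.cong[OF refl])
    fix k assume k: "k \<in> C j i"
    have "wt (Cons i ` Mk k) = (\<Sum>q\<in>Mk k. tedge_weight w (i # q))"
      unfolding wt_def by (subst sum.reindex) auto
    also have "\<dots> = wt (Mk k)" unfolding wt_def
      using ok k sub_len unfolding okg_def by (intro sum.cong[OF refl] tw_Cons) blast
    finally show "wt (Cons i ` Mk k) = wt (Mk k)" .
  qed
  finally show ?thesis .
qed

end

context bp begin

definition Mn where "Mn t k j c = Min (wt ` PM t k j c)"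

lemma PM_fin: "finite (PM t j i c)"
  by (rule finite_subset[of _ "Pow (sub_edges n E t j i)"]) (auto simp: PM_def perfect_tbm_def sub_fin)

lemma Mn_le: "M \<in> PM t k j c \<Longrightarrow> Mn t k j c \<le> wt M"
  unfolding Mn_def using PM_fin by (intro Min_le) auto

lemma Mn_in: "PM t k j c \<noteq> {} \<Longrightarrow> \<exists>M \<in> PM t k j c. wt M = Mn t k j c"
proof -
  assume "PM t k j c \<noteq> {}"
  then have "Mn t k j c \<in> wt ` PM t k j c" unfolding Mn_def using PM_fin by (intro Min_in) auto
  then show ?thesis by auto
qed

lemma sum_if_split:
  assumes "finite A" "S \<subseteq> A"
  shows "(\<Sum>k\<in>A. if k \<in> S then (p k :: real) else q k) = (\<Sum>k\<in>A. q k) + (\<Sum>k\<in>S. p k - q k)"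
proof -
  have "(\<Sum>k\<in>A. if k \<in> S then p k else q k) = (\<Sum>k\<in>A. q k + (if k \<in> S then p k - q k else 0))"
    by (rule sum.cong) auto
  also have "\<dots> = (\<Sum>k\<in>A. q k) + (\<Sum>k\<in>A. if k \<in> S then p k - q k else 0)" by (simp add: sum.distrib)
  also have "(\<Sum>k\<in>A. if k \<in> S then p k - q k else 0) = (\<Sum>k\<in>S. p k - q k)"
    using assms by (simp add: sum.If_cases Int_absorb1)
  finally show ?thesis .
qed

lemma card_C: "E i j \<Longrightarrow> card (C j i) + 1 = card (nbr n E j)"
proof -
  assume ij: "E i j"
  have "i \<in> nbr n E j" unfolding nbr_def using E_in_V[OF ij] E_sym[OF ij] by auto
  moreover have "finite (nbr n E j)" unfolding nbr_def by auto
  ultimately have "card (nbr n E j - {i}) = card (nbr n E j) - 1" "card (nbr n E j) > 0"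
    using card_gt_0_iff by (auto simp: card_Diff_singleton)
  then show ?thesis unfolding C_def by linarith
qed

lemma wt_R: "wt (if c then {[i,j]} else {}) = (if c then w i j else 0)"
  unfolding wt_def tedge_weight_def by simp

lemma step:
  assumes ij: "E i j"
    and IH: "\<forall>k\<in>C j i. PM t k j True \<noteq> {} \<and> PM t k j False \<noteq> {}"
  shows "PM (Suc t) j i c \<noteq> {} \<and> Mn (Suc t) j i c = (if c then w i j else 0) + (\<Sum>k\<in>C j i. Mn t k j False)
           + gmin (C j i) (\<lambda>k. Mn t k j True - Mn t k j False) (b j - (if c then 1 else 0))"
proof -
  define m where "m = b j - (if c then 1 else 0)"
  define nk where "nk = (\<lambda>k. Mn t k j True - Mn t k j False)"
  define R where "R = (if c then {[i,j]} else ({} :: nat list set))"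
  define v where "v = (if c then w i j else 0) + (\<Sum>k\<in>C j i. Mn t k j False) + gmin (C j i) nk m"
  have jV: "j \<in> {1..n}" using E_in_V[OF ij] by auto
  have bj: "1 \<le> b j" using b_pos[OF jV] .
  have mC: "m \<le> card (C j i)" using deg[OF jV] card_C[OF ij] unfolding m_def by auto
  have cardR: "card R + m = b j" unfolding R_def m_def using bj by auto
  obtain S where S: "S \<subseteq> C j i" "card S = m" "sum nk S = gmin (C j i) nk m"
    using gmin_in[OF C_fin mC] by metis
  have "\<forall>k\<in>C j i. \<exists>M. M \<in> PM t k j (k \<in> S) \<and> wt M = Mn t k j (k \<in> S)"
  proof
    fix k assume k: "k \<in> C j i"
    have "PM t k j (k \<in> S) \<noteq> {}" using IH k by (cases "k \<in> S") auto
    from Mn_in[OF this] show "\<exists>M. M \<in> PM t k j (k \<in> S) \<and> wt M = Mn t k j (k \<in> S)" by blast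
  qed
  from bchoice[OF this] obtain Mk where Mk': "\<forall>k\<in>C j i. Mk k \<in> PM t k j (k \<in> S) \<and> wt (Mk k) = Mn t k j (k \<in> S)"
    by blast
  then have Mk: "\<And>k. k \<in> C j i \<Longrightarrow> Mk k \<in> PM t k j (k \<in> S) \<and> wt (Mk k) = Mn t k j (k \<in> S)"
    by blast
  have ok: "okg t i j R Mk" unfolding okg_def R_def using Mk by (auto simp: PM_def perfect_tbm_def)
  have Sset: "{k \<in> C j i. [j,k] \<in> Mk k} = S" using Mk S(1) unfolding PM_def by auto
  have perf: "perfect_tbm n E b (Suc t) j i (glue i j R Mk)"
    unfolding perfect_glue[OF ij ok] Sset using Mk cardR S(2) unfolding PM_def by auto
  have notin: "[i,j] \<notin> (\<Union>k\<in>C j i. Cons i ` Mk k)"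
    using ok sub_len unfolding okg_def by fastforce
  have rootc: "[i,j] \<in> glue i j R Mk \<longleftrightarrow> c" using notin unfolding glue_def R_def by auto
  have inPM: "glue i j R Mk \<in> PM (Suc t) j i c" using perf rootc unfolding PM_def by auto
  have "wt (glue i j R Mk) = (if c then w i j else 0) + (\<Sum>k\<in>C j i. if k \<in> S then Mn t k j True else Mn t k j False)"
  proof -
    have "wt R = (if c then w i j else 0)" unfolding R_def by (rule wt_R)
    moreover have "(\<Sum>k\<in>C j i. wt (Mk k)) = (\<Sum>k\<in>C j i. if k \<in> S then Mn t k j True else Mn t k j False)"
      using Mk by (intro sum.cong) auto
    ultimately show ?thesis using wt_glue[OF ij ok] by simp
  qed
  also have "\<dots> = v" unfolding v_def sum_if_split[OF C_fin S(1)] S(3)[symmetric] by (simp add: nk_def)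
  finally have wv: "wt (glue i j R Mk) = v" .
  have low: "v \<le> wt M" if M: "M \<in> PM (Suc t) j i c" for M
  proof -
    define R' where "R' = M \<inter> {[i,j]}"
    define Mk' where "Mk' = (\<lambda>k. {q \<in> sub_edges n E t k j. i # q \<in> M})"
    have Msub: "M \<subseteq> sub_edges n E (Suc t) j i" using M unfolding PM_def perfect_tbm_def by auto
    have Meq: "M = glue i j R' Mk'" and ok': "okg t i j R' Mk'"
      using decomp[OF ij Msub] unfolding R'_def Mk'_def by auto
    have R'eq: "R' = R" unfolding R'_def R_def using M unfolding PM_def by auto
    define S' where "S' = {k \<in> C j i. [j,k] \<in> Mk' k}"
    have P': "(\<forall>k\<in>C j i. perfect_tbm n E b t k j (Mk' k)) \<and> card R' + card S' = b j"
    proof -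
      have "perfect_tbm n E b (Suc t) j i (glue i j R' Mk')" using M Meq unfolding PM_def by auto
      then show ?thesis unfolding perfect_glue[OF ij ok'] S'_def .
    qed
    have cS': "card S' = m" using P' cardR R'eq by simp
    have S'C: "S' \<subseteq> C j i" unfolding S'_def by auto
    have "(\<Sum>k\<in>C j i. if k \<in> S' then Mn t k j True else Mn t k j False) \<le> (\<Sum>k\<in>C j i. wt (Mk' k))"
    proof (rule sum_mono)
      fix k assume k: "k \<in> C j i"
      have "Mk' k \<in> PM t k j (k \<in> S')" using P' k unfolding PM_def S'_def by auto
      from Mn_le[OF this] show "(if k \<in> S' then Mn t k j True else Mn t k j False) \<le> wt (Mk' k)"
        by (auto split: if_splits)
    qed
    moreover have "gmin (C j i) nk m \<le> sum nk S'" using gmin_le[OF C_fin S'C cS'] .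
    moreover have "wt M = (if c then w i j else 0) + (\<Sum>k\<in>C j i. wt (Mk' k))"
    proof -
      have "wt R' = (if c then w i j else 0)" unfolding R'eq R_def by (rule wt_R)
      then show ?thesis using wt_glue[OF ij ok'] Meq by simp
    qed
    moreover have "(\<Sum>k\<in>C j i. if k \<in> S' then Mn t k j True else Mn t k j False)
       = (\<Sum>k\<in>C j i. Mn t k j False) + sum nk S'"
      unfolding nk_def by (rule sum_if_split[OF C_fin S'C])
    ultimately show ?thesis unfolding v_def by linarith
  qed
  have "Mn (Suc t) j i c = v" unfolding Mn_def
  proof (rule Min_eqI)
    show "finite (wt ` PM (Suc t) j i c)" using PM_fin by blast
    show "\<And>y. y \<in> wt ` PM (Suc t) j i c \<Longrightarrow> v \<le> y" using low by blast
    show "v \<in> wt ` PM (Suc t) j i c" using inPM wv by (metis image_eqI)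
  qed
  then show ?thesis using inPM unfolding v_def nk_def m_def by blast
qed

end

context bp begin

lemma sub0: "E i j \<Longrightarrow> sub_edges n E 0 j i = {[i,j]}"
proof (rule set_eqI, rule iffI)
  fix p assume "p \<in> sub_edges n E 0 j i"
  then obtain r where "p = i # j # r" "length p \<le> 2" using sub_form sub_len by fastforce
  then show "p \<in> {[i,j]}" by auto
qed (auto intro: root_in)

lemma perf0: "E i j \<Longrightarrow> perfect_tbm n E b 0 j i M \<longleftrightarrow> M \<subseteq> {[i,j]}"
  unfolding perfect_tbm_def sub0 by auto

lemma PM0: "E i j \<Longrightarrow> PM 0 j i c = {if c then {[i,j]} else {}}"
  unfolding PM_def perf0 by (cases c) auto

lemma main: "E i j \<Longrightarrow> PM t j i True \<noteq> {} \<and> PM t j i False \<noteq> {} \<and>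
   Mn t j i True - Mn t j i False = msg n E w b t j i"
proof (induction t arbitrary: i j)
  case 0
  then show ?case unfolding Mn_def PM0[OF 0] using wt_R[of True i j] wt_R[of False i j] w_sym[OF 0]
    by simp
next
  case (Suc t)
  have ij: "E i j" by fact
  have IHk: "\<And>k. k \<in> C j i \<Longrightarrow> PM t k j True \<noteq> {} \<and> PM t k j False \<noteq> {} \<and>
      Mn t k j True - Mn t k j False = msg n E w b t k j"
    using Suc.IH C_E by blast
  then have IH: "\<forall>k\<in>C j i. PM t k j True \<noteq> {} \<and> PM t k j False \<noteq> {}" by blast
  note sT = step[OF ij IH, of True] and sF = step[OF ij IH, of False]
  have jV: "j \<in> {1..n}" using E_in_V[OF ij] by auto
  have bj: "1 \<le> b j" using b_pos[OF jV] .
  have bC: "b j \<le> card (C j i)" using deg[OF jV] card_C[OF ij] by auto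
  define nk where "nk = (\<lambda>k. Mn t k j True - Mn t k j False)"
  have "Mn (Suc t) j i True - Mn (Suc t) j i False = w i j - (gmin (C j i) nk (b j) - gmin (C j i) nk (b j - 1))"
    using sT sF unfolding nk_def by simp
  also have "\<dots> = w i j - kth_smallest (b j) (image_mset nk (mset_set (C j i)))"
    using gmin_diff[OF C_fin bj bC] by simp
  also have "image_mset nk (mset_set (C j i)) = image_mset (\<lambda>l. msg n E w b t l j) (mset_set (nbr n E j - {i}))"
    unfolding C_def[symmetric]
  proof (rule image_mset_cong)
    fix x assume "x \<in># mset_set (C j i)"
    then have "x \<in> C j i" using C_fin by simp
    then show "nk x = msg n E w b t x j" using IHk unfolding nk_def by blast
  qed
  finally show ?case using sT sF w_sym[OF ij] by simp
qed

end

theorem lemma1: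
  fixes n :: nat and E :: "nat \<Rightarrow> nat \<Rightarrow> bool" and w :: "nat \<Rightarrow> nat \<Rightarrow> real"
    and b :: "nat \<Rightarrow> nat"
  assumes E_in_V: "\<And>i j. E i j \<Longrightarrow> i \<in> {1..n} \<and> j \<in> {1..n}"
    and E_sym: "\<And>i j. E i j \<Longrightarrow> E j i"
    and E_irrefl: "\<And>i. \<not> E i i"
    and w_sym: "\<And>i j. E i j \<Longrightarrow> w i j = w j i"
    and b_pos: "\<And>i. i \<in> {1..n} \<Longrightarrow> 1 \<le> b i"
    and deg: "\<And>i. i \<in> {1..n} \<Longrightarrow> b i + 1 \<le> card (nbr n E i)"
    and edge: "E i j"
  shows "tree_msg n E w b t j i = msg n E w b t j i"
proof -
  interpret bp n E w b using E_in_V E_sym E_irrefl w_sym b_pos deg by unfold_locales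
  have wte: "wt = sum (tedge_weight w)" by (rule ext) (simp add: wt_def)
  have "W_plus n E w b t j i = Mn t j i True" "W_minus n E w b t j i = Mn t j i False"
    unfolding W_plus_def W_minus_def Mn_def PM_def wte by simp_all
  then show ?thesis unfolding tree_msg_def using main[OF edge] by simp
qed

end
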